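(* Let $K$ be a field, let $R$ be a $K$-algebra and let $A$ be a right double Ore extension of $R$ with generating variables $x_1,x_2$, relation $$x_2x_1=p_{12}x_1x_2+p_{11}x_1^2+\tau_1x_1+\tau_2x_2+\tau_0\qquad(p_{12},p_{11}\in K,\ \tau_0,\tau_1,\tau_2\in R),$$ and associated maps $\sigma=(\sigma_{ij})\colon R\to M_2(R)$ and $\delta=(\delta_1,\delta_2)^T\colon R\to R^{\oplus 2}$. Suppose that $p_{11}=0$, $p_{12}\neq 0$, $\sigma_{12}=\sigma_{21}=0$ (i.e. $\sigma=\left(\begin{smallmatrix}\sigma_{11}&0\\0&\sigma_{22}\end{smallmatrix}\right)$), and $\sigma_{11}(r)\neq 0$, $\sigma_{22}(r)\neq 0$ for all $r\in R\setminus\{0\}$. Then $A$ is a skew PBW extension of $R$ (in the variables $x_1,x_2$).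
   Context: All algebras are over a field $K$. A $K$-algebra $B$ containing $R$ as a subring is a right double Ore extension of $R$ if: (1) $B$ is generated by $R$ and two elements $x_1,x_2$; (2) $x_2x_1=p_{12}x_1x_2+p_{11}x_1^2+\tau_1x_1+\tau_2x_2+\tau_0$ with $p_{12},p_{11}\in K$, $\tau_0,\tau_1,\tau_2\in R$; (3) $B$ is a free left $R$-module with basis $\{x_1^{a}x_2^{b}: a,b\ge 0\}$; (4) $x_1R+x_2R\subseteq Rx_1+Rx_2+R$. By (3),(4) there are uniquely determined $K$-linear maps $\sigma_{ij},\delta_i\colon R\to R$ with $x_ir=\sigma_{i1}(r)x_1+\sigma_{i2}(r)x_2+\delta_i(r)$ for $i=1,2$, $r\in R$; one writes $\sigma=(\sigma_{ij})\colon R\to M_2(R)$, $\delta=(\delta_1,\delta_2)^T$, $P=\{p_{12},p_{11}\}$. A ring $A$ is a skew PBW extension of a ring $R$ in $x_1,\dots,x_n$ if: (i) $R\subseteq A$; (ii) $A$ is a free left $R$-module with basis the standard monomials $x_1^{\alpha_1}\cdots x_n^{\alpha_n}$, $\alpha\in\mathbb N^n$ (with $x_1^0\cdots x_n^0=1$); (iii) for each $i$ and each $r\in R\setminus\{0\}$ there is $c_{i,r}\in R\setminus\{0\}$ with $x_ir-c_{i,r}x_i\in R$; (iv) for all $i,j$ there is $c_{i,j}\in R\setminus\{0\}$ with $x_jx_i-c_{i,j}x_ix_j\in R+Rx_1+\cdots+Rx_n$. *)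

theory Defs
  imports Main
begin

text \<open>Rings are modelled as a type class ring_1 (the ambient algebra A);
  a subring R is a subset of A closed under the ring operations.\<close>

definition is_subring :: "'a::ring_1 set \<Rightarrow> bool" where
  "is_subring R \<longleftrightarrow> 0 \<in> R \<and> 1 \<in> R \<and>
     (\<forall>a\<in>R. \<forall>b\<in>R. a + b \<in> R \<and> - a \<in> R \<and> a * b \<in> R)"

definition gen_subring :: "'a::ring_1 set \<Rightarrow> 'a set" where
  "gen_subring S = \<Inter>{T. is_subring T \<and> S \<subseteq> T}"

definition K_algebra_emb :: "('k::field \<Rightarrow> 'a::ring_1) \<Rightarrow> 'a set \<Rightarrow> bool" where
  "K_algebra_emb emb R \<longleftrightarrow>
     (\<forall>a b. emb (a + b) = emb a + emb b \<and> emb (a * b) = emb a * emb b) \<and>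
     emb 1 = 1 \<and> (\<forall>c. emb c \<in> R) \<and> (\<forall>c y. emb c * y = y * emb c)"

definition free_left_basis :: "'a::ring_1 set \<Rightarrow> 'i set \<Rightarrow> ('i \<Rightarrow> 'a) \<Rightarrow> bool" where
  "free_left_basis R I m \<longleftrightarrow>
     (\<forall>y. \<exists>c. finite {i\<in>I. c i \<noteq> 0} \<and> (\<forall>i\<in>I. c i \<in> R) \<and>
            y = (\<Sum>i\<in>{i\<in>I. c i \<noteq> 0}. c i * m i)) \<and>
     (\<forall>c. finite {i\<in>I. c i \<noteq> 0} \<and> (\<forall>i\<in>I. c i \<in> R) \<and>
            (\<Sum>i\<in>{i\<in>I. c i \<noteq> 0}. c i * m i) = 0 \<longrightarrow> (\<forall>i\<in>I. c i = 0))"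

definition right_double_Ore_ext ::
  "('k::field \<Rightarrow> 'a::ring_1) \<Rightarrow> 'a set \<Rightarrow> 'a \<Rightarrow> 'a \<Rightarrow> 'k \<Rightarrow> 'k \<Rightarrow> 'a \<Rightarrow> 'a \<Rightarrow> 'a \<Rightarrow> bool" where
  "right_double_Ore_ext emb R x1 x2 p12 p11 t0 t1 t2 \<longleftrightarrow>
     is_subring R \<and> K_algebra_emb emb R \<and>
     gen_subring (R \<union> {x1, x2}) = UNIV \<and>
     t0 \<in> R \<and> t1 \<in> R \<and> t2 \<in> R \<and>
     x2 * x1 = emb p12 * x1 * x2 + emb p11 * x1 ^ 2 + t1 * x1 + t2 * x2 + t0 \<and>
     free_left_basis R UNIV (\<lambda>(a, b). x1 ^ a * x2 ^ b) \<and>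
     (\<forall>r\<in>R. \<forall>xi\<in>{x1, x2}. \<exists>a\<in>R. \<exists>b\<in>R. \<exists>c\<in>R. xi * r = a * x1 + b * x2 + c)"

definition std_monomial :: "nat \<Rightarrow> (nat \<Rightarrow> 'a::ring_1) \<Rightarrow> (nat \<Rightarrow> nat) \<Rightarrow> 'a" where
  "std_monomial n x al = prod_list (map (\<lambda>i. x i ^ al i) [1..<Suc n])"

definition lin_R :: "'a::ring_1 set \<Rightarrow> nat \<Rightarrow> (nat \<Rightarrow> 'a) \<Rightarrow> 'a set" where
  "lin_R R n x = {r0 + (\<Sum>i\<in>{1..n}. r i * x i) | r0 r. r0 \<in> R \<and> (\<forall>i. r i \<in> R)}"

definition skew_PBW_ext :: "'a::ring_1 set \<Rightarrow> nat \<Rightarrow> (nat \<Rightarrow> 'a) \<Rightarrow> bool" where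
  "skew_PBW_ext R n x \<longleftrightarrow>
     is_subring R \<and>
     free_left_basis R {al. \<forall>i. i \<notin> {1..n} \<longrightarrow> al i = 0} (std_monomial n x) \<and>
     (\<forall>i\<in>{1..n}. \<forall>r\<in>R - {0}. \<exists>c\<in>R - {0}. x i * r - c * x i \<in> R) \<and>
     (\<forall>i\<in>{1..n}. \<forall>j\<in>{1..n}. \<exists>c\<in>R - {0}. x j * x i - c * x i * x j \<in> lin_R R n x)"

end

theory Submission
  imports Defs
begin

lemma basis_transfer:
  assumes fb: "free_left_basis R I m" and bij: "bij_betw f J I"
    and eq: "\<forall>j\<in>J. M j = m (f j)"
  shows "free_left_basis R J M"
  unfolding free_left_basis_def
proof (intro conjI allI impI)
  have inj: "inj_on f J" using bij by (rule bij_betw_imp_inj_on)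
  have img: "f ` J = I" using bij by (rule bij_betw_imp_surj_on)
  fix y
  obtain c where c: "finite {i\<in>I. c i \<noteq> 0}" "\<forall>i\<in>I. c i \<in> R"
     "y = (\<Sum>i\<in>{i\<in>I. c i \<noteq> 0}. c i * m i)"
    using conjunct1[OF fb[unfolded free_left_basis_def], rule_format, of y] by blast
  let ?A = "{j\<in>J. c (f j) \<noteq> 0}"
  have fA: "f ` ?A = {i\<in>I. c i \<noteq> 0}" using img by auto
  have injA: "inj_on f ?A" using inj by (rule inj_on_subset) auto
  have F1: "finite ?A" using finite_image_iff[OF injA] c(1) fA by simp
  have F2: "\<forall>j\<in>J. c (f j) \<in> R" using c(2) img by blast
  have F3: "y = (\<Sum>j\<in>?A. c (f j) * M j)"
  proof -
    have "(\<Sum>j\<in>?A. c (f j) * M j) = (\<Sum>j\<in>?A. c (f j) * m (f j))"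
      using eq by (intro sum.cong) auto
    also have "\<dots> = (\<Sum>i\<in>f ` ?A. c i * m i)"
      using sum.reindex[OF injA, of "\<lambda>i. c i * m i"] by simp
    finally show ?thesis using c(3) fA by simp
  qed
  show "\<exists>c. finite {i \<in> J. c i \<noteq> 0} \<and> (\<forall>i\<in>J. c i \<in> R) \<and>
            y = (\<Sum>i\<in>{i \<in> J. c i \<noteq> 0}. c i * M i)"
    by (rule exI[of _ "\<lambda>j. c (f j)"], intro conjI F1 F2 F3)
next
  have inj: "inj_on f J" using bij by (rule bij_betw_imp_inj_on)
  have img: "f ` J = I" using bij by (rule bij_betw_imp_surj_on)
  fix c
  assume h: "finite {i \<in> J. c i \<noteq> 0} \<and> (\<forall>i\<in>J. c i \<in> R) \<and>
          (\<Sum>i\<in>{i \<in> J. c i \<noteq> 0}. c i * M i) = 0"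
  let ?g = "inv_into J f"
  let ?c = "\<lambda>i. c (?g i)"
  let ?A = "{j\<in>J. c j \<noteq> 0}"
  have gf: "\<And>j. j \<in> J \<Longrightarrow> ?g (f j) = j" using inj by (simp add: inv_into_f_f)
  have gI: "\<And>i. i \<in> I \<Longrightarrow> ?g i \<in> J \<and> f (?g i) = i" using img
    by (metis f_inv_into_f inv_into_into)
  have fA: "f ` ?A = {i\<in>I. ?c i \<noteq> 0}"
  proof
    show "f ` ?A \<subseteq> {i\<in>I. ?c i \<noteq> 0}" using gf img by auto
    show "{i\<in>I. ?c i \<noteq> 0} \<subseteq> f ` ?A"
    proof
      fix i assume "i \<in> {i\<in>I. ?c i \<noteq> 0}"
      then show "i \<in> f ` ?A" using gI[of i] by (intro image_eqI[of _ _ "?g i"]) auto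
    qed
  qed
  have injA: "inj_on f ?A" using inj by (rule inj_on_subset) auto
  have "finite (f ` ?A)" using h by simp
  then have "finite {i\<in>I. ?c i \<noteq> 0}" using fA by simp
  moreover have "\<forall>i\<in>I. ?c i \<in> R" using h gI by blast
  moreover have "(\<Sum>i\<in>{i\<in>I. ?c i \<noteq> 0}. ?c i * m i) = 0"
  proof -
    have "(\<Sum>i\<in>{i\<in>I. ?c i \<noteq> 0}. ?c i * m i) = (\<Sum>i\<in>f ` ?A. ?c i * m i)"
      using fA by simp
    also have "\<dots> = (\<Sum>j\<in>?A. ?c (f j) * m (f j))"
      using sum.reindex[OF injA, of "\<lambda>i. ?c i * m i"] by simp
    also have "\<dots> = (\<Sum>j\<in>?A. c j * M j)"
      using eq gf by (intro sum.cong) auto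
    finally show ?thesis using h by simp
  qed
  ultimately have z: "\<forall>i\<in>I. ?c i = 0"
    using conjunct2[OF fb[unfolded free_left_basis_def], rule_format, of ?c] by blast
  show "\<forall>i\<in>J. c i = 0"
  proof
    fix j
    assume jJ: "j \<in> J"
    then have "f j \<in> I" using img by blast
    then have "?c (f j) = 0" using z by blast
    then show "c j = 0" using gf[OF jJ] by simp
  qed
qed

lemma lin_R_mem:
  assumes "a \<in> R" "b \<in> R" "c \<in> R"
  shows "c + a * x1 + b * x2 \<in> lin_R R 2 (\<lambda>i. if i = 1 then x1 else x2)"
proof -
  let ?r = "\<lambda>i::nat. if i = 1 then a else b"
  have "(\<Sum>i\<in>{1..2::nat}. ?r i * (if i = 1 then x1 else x2)) = a * x1 + b * x2"
    by (simp add: numeral_2_eq_2)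
  moreover have "\<forall>i. ?r i \<in> R" using assms by auto
  ultimately have "\<exists>r0 r. c + a * x1 + b * x2 = r0 + (\<Sum>i\<in>{1..2::nat}. r i * (if i = 1 then x1 else x2)) \<and> r0 \<in> R \<and> (\<forall>i. r i \<in> R)"
    using assms(3) by (intro exI[of _ c] exI[of _ ?r]) (simp add: add.assoc)
  then show ?thesis unfolding lin_R_def by blast
qed

theorem theorem3p1:
  fixes emb :: "'k::field \<Rightarrow> 'a::ring_1"
    and R :: "'a set" and x1 x2 t0 t1 t2 :: 'a and p12 p11 :: 'k
    and s11 s12 s21 s22 d1 d2 :: "'a \<Rightarrow> 'a"
  assumes ore: "right_double_Ore_ext emb R x1 x2 p12 p11 t0 t1 t2"
    and maps_in_R: "\<forall>r\<in>R. s11 r \<in> R \<and> s12 r \<in> R \<and> s21 r \<in> R \<and> s22 r \<in> R \<and> d1 r \<in> R \<and> d2 r \<in> R"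
    and x1_comm: "\<forall>r\<in>R. x1 * r = s11 r * x1 + s12 r * x2 + d1 r"
    and x2_comm: "\<forall>r\<in>R. x2 * r = s21 r * x1 + s22 r * x2 + d2 r"
    and p11: "p11 = 0" and p12: "p12 \<noteq> 0"
    and diag: "\<forall>r\<in>R. s12 r = 0 \<and> s21 r = 0"
    and nz: "\<forall>r\<in>R - {0}. s11 r \<noteq> 0 \<and> s22 r \<noteq> 0"
  shows "skew_PBW_ext R 2 (\<lambda>i. if i = 1 then x1 else x2)"
proof -
  let ?x = "\<lambda>i::nat. if i = 1 then x1 else x2"
  have O: "is_subring R \<and> K_algebra_emb emb R \<and>
     gen_subring (R \<union> {x1, x2}) = UNIV \<and>
     t0 \<in> R \<and> t1 \<in> R \<and> t2 \<in> R \<and>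
     x2 * x1 = emb p12 * x1 * x2 + emb p11 * x1 ^ 2 + t1 * x1 + t2 * x2 + t0 \<and>
     free_left_basis R UNIV (\<lambda>(a, b). x1 ^ a * x2 ^ b) \<and>
     (\<forall>r\<in>R. \<forall>xi\<in>{x1, x2}. \<exists>a\<in>R. \<exists>b\<in>R. \<exists>c\<in>R. xi * r = a * x1 + b * x2 + c)"
    using ore unfolding right_double_Ore_ext_def .
  have sub: "is_subring R" using O by blast
  have K: "K_algebra_emb emb R" using O by blast
  have ts: "t0 \<in> R" "t1 \<in> R" "t2 \<in> R" using O by blast+
  have rel0: "x2 * x1 = emb p12 * x1 * x2 + emb p11 * x1 ^ 2 + t1 * x1 + t2 * x2 + t0"
    using O by blast
  have fb: "free_left_basis R UNIV (\<lambda>(a, b). x1 ^ a * x2 ^ b)"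
    using O by blast
  have "emb (0 + 0) = emb 0 + emb 0" using K unfolding K_algebra_emb_def by blast
  then have e0: "emb 0 = 0" by simp
  have rel: "x2 * x1 = emb p12 * x1 * x2 + t1 * x1 + t2 * x2 + t0"
    using rel0 p11 e0 by simp
  have R0: "0 \<in> R" and R1: "1 \<in> R" and Rc: "\<And>a b. a \<in> R \<Longrightarrow> b \<in> R \<Longrightarrow> a + b \<in> R \<and> - a \<in> R \<and> a * b \<in> R"
    using sub unfolding is_subring_def by blast+
  have embR: "\<And>c. emb c \<in> R" and embc: "\<And>c y. emb c * y = y * emb c"
    and embm: "\<And>a b. emb (a * b) = emb a * emb b" and emb1: "emb 1 = 1"
    using K unfolding K_algebra_emb_def by blast+
  define q where "q = inverse p12"
  have qp: "emb q * emb p12 = 1" using embm[of q p12] emb1 p12 q_def by simp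
  have pnz: "emb p12 \<noteq> 0" using qp by auto
  have qnz: "emb q \<noteq> 0" using qp by auto
  let ?J = "{al::nat\<Rightarrow>nat. \<forall>i. i \<notin> {1..2} \<longrightarrow> al i = 0}"
  have bij: "bij_betw (\<lambda>al. (al 1, al 2)) ?J UNIV"
    unfolding bij_betw_def
  proof
    show "inj_on (\<lambda>al. (al 1, al 2)) ?J"
    proof (rule inj_onI)
      fix a b assume a: "a \<in> ?J" and b: "b \<in> ?J" and e: "(a 1, a 2) = (b 1, b 2)"
      show "a = b"
      proof
        fix i
        show "a i = b i" using a b e by (cases "i = 1 \<or> i = 2") auto
      qed
    qed
    show "(\<lambda>al. (al 1, al 2)) ` ?J = UNIV"
    proof (rule set_eqI, rule iffI)
      fix p :: "nat \<times> nat"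
      assume "p \<in> UNIV"
      obtain a b where p: "p = (a, b)" by fastforce
      let ?al = "\<lambda>i::nat. if i = 1 then a else if i = 2 then b else 0"
      have "?al \<in> ?J" by auto
      then show "p \<in> (\<lambda>al. (al 1, al 2)) ` ?J" using p by (intro image_eqI[of _ _ ?al]) auto
    qed auto
  qed
  have meq: "\<forall>al\<in>?J. std_monomial 2 ?x al = (\<lambda>(a, b). x1 ^ a * x2 ^ b) (al 1, al 2)"
    by (simp add: std_monomial_def numeral_2_eq_2)
  have basis: "free_left_basis R ?J (std_monomial 2 ?x)"
    by (rule basis_transfer[OF fb bij meq])
  have c3: "\<forall>i\<in>{1..2}. \<forall>r\<in>R - {0}. \<exists>c\<in>R - {0}. ?x i * r - c * ?x i \<in> R"
  proof (intro ballI)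
    fix i :: nat and r assume i: "i \<in> {1..2}" and r: "r \<in> R - {0}"
    have "i = 1 \<or> i = 2" using i by auto
    then show "\<exists>c\<in>R - {0}. ?x i * r - c * ?x i \<in> R"
    proof
      assume "i = 1"
      then show ?thesis using r x1_comm maps_in_R diag nz
        by (intro bexI[of _ "s11 r"]) auto
    next
      assume "i = 2"
      then show ?thesis using r x2_comm maps_in_R diag nz
        by (intro bexI[of _ "s22 r"]) auto
    qed
  qed
  have c4: "\<forall>i\<in>{1..2}. \<forall>j\<in>{1..2}. \<exists>c\<in>R - {0}. ?x j * ?x i - c * ?x i * ?x j \<in> lin_R R 2 ?x"
  proof (intro ballI)
    fix i j :: nat assume i: "i \<in> {1..2}" and j: "j \<in> {1..2}"
    have zl: "0 \<in> lin_R R 2 ?x" using lin_R_mem[OF R0 R0 R0, of x1 x2] by simp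
    have ij: "(i = 1 \<and> j = 1) \<or> (i = 2 \<and> j = 2) \<or> (i = 1 \<and> j = 2) \<or> (i = 2 \<and> j = 1)"
      using i j by auto
    then show "\<exists>c\<in>R - {0}. ?x j * ?x i - c * ?x i * ?x j \<in> lin_R R 2 ?x"
    proof (elim disjE conjE)
      assume "i = 1" "j = 1"
      then show ?thesis using zl R1 by (intro bexI[of _ 1]) auto
    next
      assume "i = 2" "j = 2"
      then show ?thesis using zl R1 by (intro bexI[of _ 1]) auto
    next
      assume "i = 1" "j = 2"
      have "x2 * x1 - emb p12 * x1 * x2 = t0 + t1 * x1 + t2 * x2"
        using rel by (simp add: algebra_simps)
      then show ?thesis using \<open>i = 1\<close> \<open>j = 2\<close> lin_R_mem[OF ts(2) ts(3) ts(1)] embR pnz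
        by (intro bexI[of _ "emb p12"]) auto
    next
      assume "i = 2" "j = 1"
      have "emb q * x2 * x1 = emb q * (x2 * x1)" by (simp add: mult.assoc)
      also have "\<dots> = (emb q * emb p12) * x1 * x2 + (emb q * t1) * x1 + (emb q * t2) * x2 + emb q * t0"
        using rel by (simp add: algebra_simps)
      also have "\<dots> = x1 * x2 + (emb q * t1) * x1 + (emb q * t2) * x2 + emb q * t0"
        using qp by simp
      finally have eq: "x1 * x2 - emb q * x2 * x1 = (- (emb q * t0)) + (- (emb q * t1)) * x1 + (- (emb q * t2)) * x2"
        by (simp add: algebra_simps)
      have m: "- (emb q * t0) \<in> R" "- (emb q * t1) \<in> R" "- (emb q * t2) \<in> R"
        using Rc embR ts by blast+
      have L: "(- (emb q * t0)) + (- (emb q * t1)) * x1 + (- (emb q * t2)) * x2 \<in> lin_R R 2 ?x"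
        by (rule lin_R_mem[OF m(2) m(3) m(1)])
      have L2: "x1 * x2 - emb q * x2 * x1 \<in> lin_R R 2 ?x"
        using L by (simp only: eq)
      have "emb q \<in> R - {0}" using embR qnz by blast
      moreover have "?x j * ?x i - emb q * ?x i * ?x j \<in> lin_R R 2 ?x"
        using L2 \<open>i = 2\<close> \<open>j = 1\<close> by simp
      ultimately show ?thesis by blast
    qed
  qed
  show ?thesis unfolding skew_PBW_ext_def by (intro conjI sub basis c3 c4)
qed

end
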